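(* Let $n=2^k$ and let $G$ be a random graph drawn from $\mathcal G(n,\tfrac12)$ on vertex set $\{0,1\}^k$. Then with probability tending to $1$ as $n\to\infty$, the following property P holds: for every $U\subseteq V(G)$ with $|U|\le \tfrac13 k$ and every pattern $p$ with $|p|\le\tfrac13 k$, there is at least one vertex in $N(U)$ consistent with $p$.
   Context: $\mathcal G(n,\tfrac12)$: each pair of vertices is an edge independently with probability $1/2$. Vertices are identified with binary strings $v=v_1\cdots v_k$. A pattern is a string $p=p_1\cdots p_k\in\{*,0,1\}^k$; $p$ is consistent with vertex $v$ if for every $i$, $p_i=v_i$ or $p_i=*$; $|p|$ is the number of positions with $p_i\in\{0,1\}$. For $v\in V(G)$, $N(v)=\{u:\{u,v\}\in E(G)\}$, and for $U\subseteq V(G)$, $N(U)=\bigcap_{v\in U}N(v)$ (the common neighbours of all vertices of $U$; for $U=\emptyset$ this is $V(G)$). *)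

theory Defs
  imports "HOL-Probability.Probability"
begin

definition cube :: "nat \<Rightarrow> bool list set" where
  "cube k = {v. length v = k}"

definition all_edges :: "nat \<Rightarrow> bool list set set" where
  "all_edges k = {{u, v} | u v. u \<in> cube k \<and> v \<in> cube k \<and> u \<noteq> v}"

text \<open>G(n,1/2) on vertex set {0,1}^k: the uniform distribution on all edge sets
  (each possible edge present independently with probability 1/2).\<close>
definition Gnhalf :: "nat \<Rightarrow> bool list set set pmf" where
  "Gnhalf k = pmf_of_set (Pow (all_edges k))"

text \<open>Common neighbourhood N(U) of a vertex set U in graph with edge set E
  (equals the whole vertex set if U is empty).\<close>
definition common_nbhd :: "nat \<Rightarrow> bool list set set \<Rightarrow> bool list set \<Rightarrow> bool list set" where
  "common_nbhd k E U = {w \<in> cube k. \<forall>u\<in>U. {u, w} \<in> E}"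

text \<open>Patterns in {*,0,1}^k: None = *, Some b = fixed bit b.\<close>
definition consistent :: "bool option list \<Rightarrow> bool list \<Rightarrow> bool" where
  "consistent p v \<longleftrightarrow> (\<forall>i < length p. p ! i = None \<or> p ! i = Some (v ! i))"

definition pat_size :: "bool option list \<Rightarrow> nat" where
  "pat_size p = card {i. i < length p \<and> p ! i \<noteq> None}"

definition propP :: "nat \<Rightarrow> bool list set set \<Rightarrow> bool" where
  "propP k E \<longleftrightarrow>
     (\<forall>U \<subseteq> cube k. real (card U) \<le> real k / 3 \<longrightarrow>
       (\<forall>p. length p = k \<longrightarrow> real (pat_size p) \<le> real k / 3 \<longrightarrow>
          (\<exists>w \<in> common_nbhd k E U. consistent p w)))"

end

theory Submission
  imports Defs "HOL-Real_Asymp.Real_Asymp"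
begin


lemma prob_pair_times:
  "measure_pmf.prob (pair_pmf M N) (X \<times> Y) = measure_pmf.prob M X * measure_pmf.prob N Y"
proof -
  have "measure_pmf.prob M X * measure_pmf.prob N Y =
        measure_pmf.prob M (X \<inter> set_pmf M) * measure_pmf.prob N (Y \<inter> set_pmf N)"
    by (simp add: measure_Int_set_pmf)
  also have "\<dots> = measure_pmf.prob (pair_pmf M N) ((X \<inter> set_pmf M) \<times> (Y \<inter> set_pmf N))"
    by (rule measure_pmf_prob_product[symmetric]) (auto intro: countable_Int2)
  also have "(X \<inter> set_pmf M) \<times> (Y \<inter> set_pmf N) = (X \<times> Y) \<inter> set_pmf (pair_pmf M N)"
    by auto
  also have "measure_pmf.prob (pair_pmf M N) \<dots> = measure_pmf.prob (pair_pmf M N) (X \<times> Y)"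
    by (rule measure_Int_set_pmf)
  finally show ?thesis ..
qed

lemma block_prob:
  assumes "finite A"
  shows "measure_pmf.prob (Pi_pmf A False (\<lambda>_. bernoulli_pmf (1/2))) {f. \<exists>x\<in>A. \<not> f x}
         = 1 - (1/2::real)^card A"
proof -
  have 1: "measure_pmf.prob (Pi_pmf A False (\<lambda>_. bernoulli_pmf (1/2))) (Pi A (\<lambda>_. {True})) = (1/2)^card A"
    using assms by (simp add: measure_Pi_pmf_Pi measure_pmf_single)
  have "{f. \<exists>x\<in>A. \<not> f x} = UNIV - Pi A (\<lambda>_. {True})" by (auto simp: Pi_def)
  then show ?thesis using 1 measure_pmf.prob_compl[of "Pi A (\<lambda>_. {True})" "Pi_pmf A False (\<lambda>_. bernoulli_pmf (1/2))"]
    by simp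
qed

lemma key:
  fixes S :: "'w \<Rightarrow> 'a set"
  assumes "finite W" "\<And>w. w\<in>W \<Longrightarrow> finite (S w)" "disjoint_family_on S W"
  shows "measure_pmf.prob (Pi_pmf (\<Union>w\<in>W. S w) False (\<lambda>_. bernoulli_pmf (1/2)))
           {f. \<forall>w\<in>W. \<exists>x\<in>S w. \<not> f x} = (\<Prod>w\<in>W. 1 - (1/2::real)^card (S w))"
  using assms
proof (induction W rule: finite_induct)
  case empty then show ?case by simp
next
  case (insert w W)
  let ?q = "\<lambda>_::'a. bernoulli_pmf (1/2)"
  have disj: "disjoint_family_on S W" using insert.prems(2) by (rule disjoint_family_on_mono[rotated]) auto
  note IH = insert.IH[OF _ disj]
  let ?A = "S w" let ?B = "\<Union>v\<in>W. S v"
  have AB0: "\<forall>v\<in>W. S w \<inter> S v = {}" using insert.prems(2) insert.hyps(2)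
    unfolding disjoint_family_on_def by (metis insertCI)
  have AB: "?A \<inter> ?B = {}" using AB0 by (simp add: Int_UN_distrib)
  have fin: "finite ?A" "finite ?B"
    using insert.prems(1)[of w] apply simp
    apply (rule finite_UN_I[OF insert.hyps(1)]) using insert.prems(1) by simp
  have U: "(\<Union>v\<in>insert w W. S v) = ?A \<union> ?B" by simp
  define h where "h = (\<lambda>(f::'a\<Rightarrow>bool,g::'a\<Rightarrow>bool) x. if x \<in> ?A then f x else g x)"
  have P: "Pi_pmf (\<Union>v\<in>insert w W. S v) False ?q = map_pmf h (pair_pmf (Pi_pmf ?A False ?q) (Pi_pmf ?B False ?q))"
    unfolding U h_def by (fact Pi_pmf_union[OF fin AB, of False ?q])
  have notA: "\<And>v x. v \<in> W \<Longrightarrow> x \<in> S v \<Longrightarrow> x \<notin> ?A" using AB by blast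
  have pre: "h -` {f. \<forall>v\<in>insert w W. \<exists>x\<in>S v. \<not> f x} = {f. \<exists>x\<in>?A. \<not> f x} \<times> {g. \<forall>v\<in>W. \<exists>x\<in>S v. \<not> g x}"
  proof (intro set_eqI)
    fix fg :: "('a\<Rightarrow>bool) \<times> ('a\<Rightarrow>bool)"
    obtain f g where fg: "fg = (f,g)" by (cases fg)
    define H where "H = h (f,g)"
    have H: "\<And>x. H x = (if x \<in> ?A then f x else g x)" unfolding H_def h_def by simp
    have 1: "(\<forall>v\<in>insert w W. \<exists>x\<in>S v. \<not> H x) \<longleftrightarrow> (\<exists>x\<in>?A. \<not> H x) \<and> (\<forall>v\<in>W. \<exists>x\<in>S v. \<not> H x)"
      by simp
    have 2: "(\<exists>x\<in>?A. \<not> H x) \<longleftrightarrow> (\<exists>x\<in>?A. \<not> f x)" using H by simp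
    have 3: "(\<forall>v\<in>W. \<exists>x\<in>S v. \<not> H x) \<longleftrightarrow> (\<forall>v\<in>W. \<exists>x\<in>S v. \<not> g x)"
      using H notA by metis
    show "fg \<in> h -` {f. \<forall>v\<in>insert w W. \<exists>x\<in>S v. \<not> f x} \<longleftrightarrow> fg \<in> {f. \<exists>x\<in>?A. \<not> f x} \<times> {g. \<forall>v\<in>W. \<exists>x\<in>S v. \<not> g x}"
      unfolding fg using 1 2 3 by (simp add: H_def)
  qed
  have finW: "\<And>v. v \<in> W \<Longrightarrow> finite (S v)" using insert.prems(1) by simp
  have "measure_pmf.prob (Pi_pmf (\<Union>v\<in>insert w W. S v) False ?q) {f. \<forall>v\<in>insert w W. \<exists>x\<in>S v. \<not> f x}
     = (1 - (1/2)^card ?A) * (\<Prod>v\<in>W. 1 - (1/2::real)^card (S v))"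
    by (simp only: P measure_map_pmf pre prob_pair_times block_prob[OF fin(1)] IH[OF finW])
  then show ?case unfolding prod.insert[OF insert.hyps(1,2)] .
qed



lemma cube_conv: "cube k = {xs. set xs \<subseteq> UNIV \<and> length xs = k}"
  by (auto simp: cube_def)

lemma finite_cube: "finite (cube k)"
  unfolding cube_conv by (rule finite_lists_length_eq) simp

lemma card_cube: "card (cube k) = 2^k"
  unfolding cube_conv by (subst card_lists_length_eq) (simp_all add: card_UNIV_bool)

lemma finite_all_edges: "finite (all_edges k)"
proof -
  have "all_edges k \<subseteq> Pow (cube k)" by (auto simp: all_edges_def)
  then show ?thesis using finite_cube by (meson finite_Pow_iff finite_subset)
qed

lemma Gnhalf_conv: "Gnhalf k = map_pmf (\<lambda>b. {x\<in>all_edges k. b x}) (Pi_pmf (all_edges k) False (\<lambda>_. bernoulli_pmf (1/2)))"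
  by (simp add: Gnhalf_def pmf_of_set_Pow_conv_bernoulli finite_all_edges)

lemma card_consistent:
  assumes "length p = k"
  shows "2^(k - pat_size p) \<le> card {w\<in>cube k. consistent p w}"
proof -
  define F where "F = {i. i < k \<and> p!i = None}"
  define \<phi> where "\<phi> T = map (\<lambda>i. case p!i of None \<Rightarrow> i\<in>T | Some b \<Rightarrow> b) [0..<k]" for T
  have inj: "inj_on \<phi> (Pow F)"
  proof (rule inj_onI)
    fix T1 T2 assume T1: "T1 \<in> Pow F" and T2: "T2 \<in> Pow F" and eq: "\<phi> T1 = \<phi> T2"
    show "T1 = T2"
    proof (rule set_eqI)
      fix i
      show "i\<in>T1 \<longleftrightarrow> i\<in>T2"
      proof (cases "i \<in> F")
        case True
        then have "i<k" "p!i = None" by (auto simp: F_def)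
        then have "\<phi> T1 ! i = (i\<in>T1)" "\<phi> T2 ! i = (i\<in>T2)" by (simp_all add: \<phi>_def)
        then show ?thesis using eq by simp
      next
        case False then show ?thesis using T1 T2 by auto
      qed
    qed
  qed
  have img: "\<phi> ` Pow F \<subseteq> {w\<in>cube k. consistent p w}"
  proof
    fix w assume "w \<in> \<phi> ` Pow F"
    then obtain T where w: "w = \<phi> T" by blast
    have "length w = k" by (simp add: w \<phi>_def)
    moreover have "consistent p w" unfolding consistent_def
    proof (intro allI impI)
      fix i assume "i < length p"
      then have "i < k" using assms by simp
      then show "p ! i = None \<or> p ! i = Some (w ! i)"
        by (cases "p!i") (simp_all add: w \<phi>_def)
    qed
    ultimately show "w \<in> {w\<in>cube k. consistent p w}" by (simp add: cube_def)
  qed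
  have cardF: "card F + pat_size p = k"
  proof -
    have "{..<k} = F \<union> {i. i<length p \<and> p!i \<noteq> None}" using assms by (auto simp: F_def)
    moreover have "F \<inter> {i. i<length p \<and> p!i \<noteq> None} = {}" by (auto simp: F_def)
    moreover have "finite F" by (auto simp: F_def)
    ultimately have "card {..<k} = card F + card {i. i<length p \<and> p!i \<noteq> None}"
      by (simp add: card_Un_disjoint)
    then show ?thesis by (simp add: pat_size_def)
  qed
  have finF: "finite F" by (auto simp: F_def)
  have fin: "finite {w\<in>cube k. consistent p w}" using finite_cube by simp
  have "2^(k - pat_size p) = card (Pow F)" using cardF finF by (simp add: card_Pow)
  also have "\<dots> = card (\<phi> ` Pow F)" using inj by (simp add: card_image)
  also have "\<dots> \<le> card {w\<in>cube k. consistent p w}" by (rule card_mono[OF fin img])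
  finally show ?thesis .
qed



lemma bad_bound:
  assumes "U \<subseteq> cube k" "length p = k"
  shows "measure_pmf.prob (Gnhalf k) {E. \<not>(\<exists>w\<in>common_nbhd k E U. consistent p w)}
         \<le> (1 - (1/2::real)^card U) ^ card {w\<in>cube k. consistent p w \<and> w \<notin> U}"
proof -
  define A where "A = all_edges k"
  define W where "W = {w\<in>cube k. consistent p w \<and> w \<notin> U}"
  define S where "S w = (\<lambda>u. {u,w}) ` U" for w
  define D where "D = (\<Union>w\<in>W. S w)"
  define Bad where "Bad = {E. \<not>(\<exists>w\<in>common_nbhd k E U. consistent p w)}"
  let ?q = "\<lambda>_::bool list set. bernoulli_pmf (1/2)"
  define Ev where "Ev = {f::bool list set \<Rightarrow> bool. \<forall>w\<in>W. \<exists>x\<in>S w. \<not> f x}"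
  have finA: "finite A" by (simp add: A_def finite_all_edges)
  have finU: "finite U" using assms(1) finite_cube finite_subset by blast
  have finW: "finite W" using finite_cube by (simp add: W_def)
  have SA: "S w \<subseteq> A" if "w \<in> W" for w
  proof
    fix x assume "x \<in> S w"
    then obtain u where u: "u \<in> U" "x = {u,w}" by (auto simp: S_def)
    have "w \<in> cube k" "w \<notin> U" using that by (auto simp: W_def)
    moreover have "u \<in> cube k" using u assms(1) by blast
    ultimately show "x \<in> A" unfolding A_def all_edges_def using u by blast
  qed
  have DA: "D \<subseteq> A" unfolding D_def using SA by blast
  have disj: "disjoint_family_on S W"
    unfolding disjoint_family_on_def
  proof (intro ballI impI)
    fix w1 w2 assume w: "w1 \<in> W" "w2 \<in> W" "w1 \<noteq> w2"
    show "S w1 \<inter> S w2 = {}"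
    proof (rule ccontr)
      assume "S w1 \<inter> S w2 \<noteq> {}"
      then obtain u1 u2 where u: "u1 \<in> U" "u2 \<in> U" "{u1,w1} = {u2,w2}" by (auto simp: S_def)
      have "w1 \<notin> U" "w2 \<notin> U" using w by (auto simp: W_def)
      then show False using u w(3) by (auto simp: doubleton_eq_iff)
    qed
  qed
  have cardS: "card (S w) = card U" if "w \<in> W" for w
  proof -
    have "inj_on (\<lambda>u. {u,w}) U" by (auto simp: inj_on_def doubleton_eq_iff)
    then show ?thesis unfolding S_def by (rule card_image)
  qed
  have 1: "measure_pmf.prob (Gnhalf k) Bad = measure_pmf.prob (Pi_pmf A False ?q) ((\<lambda>b. {x\<in>A. b x}) -` Bad)"
    by (simp add: Gnhalf_conv A_def)
  have 2: "(\<lambda>b. {x\<in>A. b x}) -` Bad \<subseteq> Ev"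
  proof
    fix b assume b: "b \<in> (\<lambda>b. {x\<in>A. b x}) -` Bad"
    show "b \<in> Ev" unfolding Ev_def
    proof (intro CollectI ballI)
      fix w assume w: "w \<in> W"
      show "\<exists>x\<in>S w. \<not> b x"
      proof (rule ccontr)
        assume "\<not> (\<exists>x\<in>S w. \<not> b x)"
        then have bw: "\<forall>x\<in>S w. b x" by blast
        have "\<forall>u\<in>U. {u,w} \<in> {x\<in>A. b x}"
        proof
          fix u assume "u \<in> U"
          then have "{u,w} \<in> S w" by (simp add: S_def)
          then show "{u,w} \<in> {x\<in>A. b x}" using bw SA[OF w] by blast
        qed
        moreover have "w \<in> cube k" "consistent p w" using w by (auto simp: W_def)
        ultimately have "w \<in> common_nbhd k {x\<in>A. b x} U" "consistent p w"
          by (auto simp: common_nbhd_def)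
        then show False using b by (auto simp: Bad_def)
      qed
    qed
  qed
  have 3: "measure_pmf.prob (Pi_pmf A False ?q) Ev = measure_pmf.prob (Pi_pmf D False ?q) Ev"
  proof -
    have P: "Pi_pmf D False ?q = map_pmf (\<lambda>f x. if x\<in>D then f x else False) (Pi_pmf A False ?q)"
      by (rule Pi_pmf_subset[OF finA DA])
    have "(\<lambda>f x. if x\<in>D then f x else False) -` Ev = Ev"
    proof (rule set_eqI)
      fix f :: "bool list set \<Rightarrow> bool"
      have "\<And>w x. w \<in> W \<Longrightarrow> x \<in> S w \<Longrightarrow> x \<in> D" unfolding D_def by blast
      then have "(\<forall>w\<in>W. \<exists>x\<in>S w. \<not> (if x\<in>D then f x else False)) \<longleftrightarrow> (\<forall>w\<in>W. \<exists>x\<in>S w. \<not> f x)"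
        by metis
      then show "f \<in> (\<lambda>f x. if x\<in>D then f x else False) -` Ev \<longleftrightarrow> f \<in> Ev"
        unfolding Ev_def by simp
    qed
    then show ?thesis unfolding P by simp
  qed
  have 4: "measure_pmf.prob (Pi_pmf D False ?q) Ev = (\<Prod>w\<in>W. 1 - (1/2::real)^card (S w))"
    unfolding D_def Ev_def by (rule key[OF finW _ disj]) (simp add: S_def finU)
  have 5: "(\<Prod>w\<in>W. 1 - (1/2::real)^card (S w)) = (1 - (1/2)^card U)^card W"
    using cardS by simp
  have "measure_pmf.prob (Gnhalf k) Bad \<le> measure_pmf.prob (Pi_pmf A False ?q) Ev"
    unfolding 1 by (rule measure_pmf.finite_measure_mono[OF 2]) simp
  then show ?thesis using 3 4 5 by (simp add: Bad_def W_def)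
qed

lemma num_bound:
  fixes c s n k :: nat
  assumes c: "real c \<le> real k/3" and s: "real s \<le> real k/3" and n: "real n \<ge> 2^(k-s) - real c"
  shows "(1 - (1/2::real)^c)^n \<le> exp (real k - 2 powr (real k/3))"
proof -
  define a where "a = (1/2::real)^c"
  have a0: "0 \<le> a" "a \<le> 1" by (simp_all add: a_def power_le_one)
  have "(1 - a)^n \<le> exp(-a)^n"
    by (rule power_mono) (use exp_ge_add_one_self[of "-a"] a0 in auto)
  also have "\<dots> = exp(-a * real n)" by (simp add: exp_of_nat_mult[symmetric] mult.commute)
  also have "\<dots> \<le> exp(real k - 2 powr (real k/3))"
  proof -
    define b where "b = 2 powr (- (real k/3))"
    have a_eq: "a = 2 powr (- real c)" by (simp add: a_def powr_minus powr_realpow power_one_over inverse_eq_divide)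
    have ab: "b \<le> a" unfolding a_eq b_def by (rule powr_mono) (use c in auto)
    have b0: "0 < b" "b \<le> 1" unfolding b_def
      using powr_mono[of "-(real k/3)" 0 "2::real"] by auto
    have sk: "s \<le> k" using s by linarith
    have "(2::real)^(k-s) = 2 powr (real (k - s))" by (simp add: powr_realpow)
    also have "\<dots> \<ge> 2 powr (2*real k/3)" by (rule powr_mono) (use s sk in \<open>auto simp: of_nat_diff\<close>)
    finally have p: "(2::real)^(k-s) \<ge> 2 powr (2*real k/3)" .
    have ck: "real c \<le> real k" using c by linarith
    have n2: "real n \<ge> 2 powr (2*real k/3) - real k" using n p ck by linarith
    have "b * (2 powr (2*real k/3) - real k) \<le> b * real n" using n2 b0 by (intro mult_left_mono) auto
    also have "\<dots> \<le> a * real n" using ab by (intro mult_right_mono) auto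
    finally have 1: "b * (2 powr (2*real k/3) - real k) \<le> a * real n" .
    have "b * 2 powr (2*real k/3) = 2 powr (real k/3)" unfolding b_def by (simp add: powr_add[symmetric])
    then have "b * (2 powr (2*real k/3) - real k) = 2 powr (real k/3) - b * real k" by (simp add: algebra_simps)
    moreover have "b * real k \<le> real k" using b0 by (simp add: mult_left_le_one_le)
    ultimately have "2 powr (real k/3) - real k \<le> a * real n" using 1 by linarith
    then show ?thesis by simp
  qed
  finally show ?thesis by (simp add: a_def)
qed

lemma card_Us: "card {U. U \<subseteq> cube k \<and> card U \<le> k} \<le> (k+1) * 2^(k*k)"
  and finite_Us: "finite {U. U \<subseteq> cube k \<and> card U \<le> k}"
proof -
  define L where "L = {xs. set xs \<subseteq> cube k \<and> length xs \<le> k}"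
  have sub: "{U. U \<subseteq> cube k \<and> card U \<le> k} \<subseteq> set ` L"
  proof
    fix U assume U: "U \<in> {U. U \<subseteq> cube k \<and> card U \<le> k}"
    then have "finite U" using finite_cube finite_subset by blast
    then obtain xs where "set xs = U" "distinct xs" using finite_distinct_list by blast
    then have "length xs = card U" by (metis distinct_card)
    then show "U \<in> set ` L" using U \<open>set xs = U\<close> unfolding L_def by auto
  qed
  have finL: "finite L" unfolding L_def by (rule finite_lists_length_le[OF finite_cube])
  show "finite {U. U \<subseteq> cube k \<and> card U \<le> k}" using sub finL by (meson finite_imageI finite_subset)
  have "card {U. U \<subseteq> cube k \<and> card U \<le> k} \<le> card (set ` L)" using sub finL by (intro card_mono) auto
  also have "\<dots> \<le> card L" using finL by (rule card_image_le)
  also have "\<dots> = (\<Sum>i\<le>k. (2^k)^i)" unfolding L_def by (simp add: card_lists_length_le[OF finite_cube] card_cube)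
  also have "\<dots> \<le> (\<Sum>i\<le>k. (2::nat)^(k*k))"
  proof (rule sum_mono)
    fix i assume "i \<in> {..k}"
    then have "((2::nat)^k) ^ i \<le> (2^k)^k" by (intro power_increasing) auto
    then show "((2::nat)^k) ^ i \<le> 2^(k*k)" by (simp add: power_mult)
  qed
  also have "\<dots> = (k+1) * 2^(k*k)" by simp
  finally show "card {U. U \<subseteq> cube k \<and> card U \<le> k} \<le> (k+1) * 2^(k*k)" .
qed



lemma card_Ps: "card {p::bool option list. set p \<subseteq> UNIV \<and> length p = k} = 3^k"
  and finite_Ps: "finite {p::bool option list. set p \<subseteq> UNIV \<and> length p = k}"
proof -
  have c: "card (UNIV :: bool option set) = 3" by (simp add: UNIV_option_conv card_image)
  show "card {p::bool option list. set p \<subseteq> UNIV \<and> length p = k} = 3^k"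
    by (subst card_lists_length_eq) (simp_all add: c)
  show "finite {p::bool option list. set p \<subseteq> UNIV \<and> length p = k}"
    by (rule finite_lists_length_eq) simp
qed

lemma pair_bound:
  assumes U: "U \<subseteq> cube k" "real (card U) \<le> real k/3" and p: "length p = k" "real (pat_size p) \<le> real k/3"
  shows "measure_pmf.prob (Gnhalf k) {E. \<not>(\<exists>w\<in>common_nbhd k E U. consistent p w)}
         \<le> exp (real k - 2 powr (real k/3))"
proof -
  define C where "C = {w\<in>cube k. consistent p w}"
  have W: "{w\<in>cube k. consistent p w \<and> w \<notin> U} = C - U" by (auto simp: C_def)
  have finU: "finite U" using U(1) finite_cube finite_subset by blast
  have "card C - card U \<le> card (C - U)" by (rule diff_card_le_card_Diff[OF finU])
  moreover have "2^(k - pat_size p) \<le> card C" unfolding C_def by (rule card_consistent[OF p(1)])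
  ultimately have d: "card C - card U \<le> card (C - U)" and e: "2^(k - pat_size p) \<le> card C" by auto
  have a: "real (card C) - real (card U) \<le> real (card (C - U))"
  proof (cases "card U \<le> card C")
    case True then show ?thesis using d by (metis of_nat_diff of_nat_le_iff)
  next
    case False then show ?thesis by simp
  qed
  have b: "(2::real)^(k - pat_size p) \<le> real (card C)" using e by (metis of_nat_le_iff of_nat_numeral of_nat_power)
  have "real (card (C - U)) \<ge> 2^(k - pat_size p) - real (card U)" using a b by linarith
  then have "(1 - (1/2::real)^card U) ^ card (C - U) \<le> exp (real k - 2 powr (real k/3))"
    by (intro num_bound[OF U(2) p(2)])
  then show ?thesis using bad_bound[OF U(1) p(1)] unfolding W by linarith
qed

theorem mainTheorem5:
  shows "(\<lambda>k. measure_pmf.prob (Gnhalf k) {E. propP k E}) \<longlonglongrightarrow> 1"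
proof -
  define \<beta> where "\<beta> k = exp (real k - 2 powr (real k/3))" for k::nat
  define T where "T k = real (k+1) * 2^(k*k) * 3^k * \<beta> k" for k::nat
  have bnd: "measure_pmf.prob (Gnhalf k) {E. \<not> propP k E} \<le> T k" for k
  proof -
    define I where "I = {(U,p). U \<subseteq> cube k \<and> real (card U) \<le> real k/3 \<and> length p = k \<and> real (pat_size p) \<le> real k/3}"
    define B where "B = (\<lambda>(U,p). {E. \<not>(\<exists>w\<in>common_nbhd k E U. consistent p w)})"
    define Us where "Us = {U. U \<subseteq> cube k \<and> card U \<le> k}"
    define Ps where "Ps = {p::bool option list. set p \<subseteq> UNIV \<and> length p = k}"
    have IUP: "I \<subseteq> Us \<times> Ps"
    proof
      fix x assume "x \<in> I"
      then obtain U p where x: "x = (U,p)" "U \<subseteq> cube k" "real (card U) \<le> real k/3" "length p = k" by (auto simp: I_def)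
      then have "card U \<le> k" by linarith
      then show "x \<in> Us \<times> Ps" using x by (auto simp: Us_def Ps_def)
    qed
    have finI: "finite I" using IUP finite_Us finite_Ps unfolding Us_def Ps_def by (meson finite_SigmaI finite_subset)
    have cardI: "card I \<le> (k+1) * 2^(k*k) * 3^k"
    proof -
      have "card I \<le> card (Us \<times> Ps)" using IUP finite_Us finite_Ps unfolding Us_def Ps_def by (intro card_mono) auto
      also have "\<dots> = card Us * card Ps" by (rule card_cartesian_product)
      also have "\<dots> \<le> (k+1) * 2^(k*k) * 3^k" unfolding Us_def Ps_def card_Ps using card_Us by simp
      finally show ?thesis .
    qed
    have sub: "{E. \<not> propP k E} \<subseteq> (\<Union>i\<in>I. B i)"
    proof
      fix E assume "E \<in> {E. \<not> propP k E}"
      then have "\<exists>U. U \<subseteq> cube k \<and> real (card U) \<le> real k/3 \<and> (\<exists>p. length p = k \<and> real (pat_size p) \<le> real k/3 \<and>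
        \<not>(\<exists>w\<in>common_nbhd k E U. consistent p w))" unfolding propP_def by simp
      then obtain U p where "U \<subseteq> cube k" "real (card U) \<le> real k/3" "length p = k" "real (pat_size p) \<le> real k/3"
        "\<not>(\<exists>w\<in>common_nbhd k E U. consistent p w)" by blast
      then have "(U,p) \<in> I" "E \<in> B (U,p)" by (simp_all add: I_def B_def)
      then show "E \<in> (\<Union>i\<in>I. B i)" by blast
    qed
    have "measure_pmf.prob (Gnhalf k) {E. \<not> propP k E} \<le> measure_pmf.prob (Gnhalf k) (\<Union>i\<in>I. B i)"
      by (rule measure_pmf.finite_measure_mono[OF sub]) simp
    also have "\<dots> \<le> (\<Sum>i\<in>I. measure_pmf.prob (Gnhalf k) (B i))"
      by (rule measure_pmf.finite_measure_subadditive_finite[OF finI]) auto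
    also have "\<dots> \<le> (\<Sum>i\<in>I. \<beta> k)"
    proof (rule sum_mono)
      fix i assume "i \<in> I"
      then obtain U p where i: "i = (U,p)" "U \<subseteq> cube k" "real (card U) \<le> real k/3" "length p = k" "real (pat_size p) \<le> real k/3"
        by (auto simp: I_def)
      show "measure_pmf.prob (Gnhalf k) (B i) \<le> \<beta> k"
        unfolding i(1) B_def \<beta>_def using pair_bound[OF i(2-5)] by simp
    qed
    also have "\<dots> = real (card I) * \<beta> k" by simp
    also have "\<dots> \<le> real ((k+1) * 2^(k*k) * 3^k) * \<beta> k"
    proof (rule mult_right_mono)
      show "real (card I) \<le> real ((k+1) * 2^(k*k) * 3^k)" using cardI by (simp only: of_nat_le_iff)
    qed (simp add: \<beta>_def)
    also have "\<dots> = T k" by (simp add: T_def algebra_simps)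
    finally show ?thesis .
  qed
  have T0: "T \<longlonglongrightarrow> 0" unfolding T_def \<beta>_def by real_asymp
  have bad0: "(\<lambda>k. measure_pmf.prob (Gnhalf k) {E. \<not> propP k E}) \<longlonglongrightarrow> 0"
    by (rule Lim_null_comparison[OF _ T0]) (use bnd in simp)
  have eq: "measure_pmf.prob (Gnhalf k) {E. propP k E} = 1 - measure_pmf.prob (Gnhalf k) {E. \<not> propP k E}" for k
  proof -
    have "{E. propP k E} = UNIV - {E. \<not> propP k E}" by auto
    then show ?thesis using measure_pmf.prob_compl[of "{E. \<not> propP k E}" "Gnhalf k"] by simp
  qed
  have "(\<lambda>k. 1 - measure_pmf.prob (Gnhalf k) {E. \<not> propP k E}) \<longlonglongrightarrow> 1 - 0"
    by (intro tendsto_intros bad0)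
  then show ?thesis unfolding eq by simp
qed

end
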